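(* Let $p\in J$ and let $p=a_Iq_I+a_Jq_J$ (with $a_I+a_J=1$) be a two-point splitting that is optimal at $p$, i.e. attains the maximum in $V_\delta(p)=\max_{\mu\in\mathcal{S}(p)}\{(1-\delta)\mu(\{q\in I\})+\delta\,\mathbb{E}_\mu[V_\delta(\phi(q))]\}$. If $a_I>0$ and $a_J>0$, then (1) $V_\delta$ is affine on the segment $[q_I,q_J]$; and (2) for every $p'\in[q_I,q_J]$, the splitting of $p'$ between $q_I$ and $q_J$ (with the weights determined by $p'$) is optimal at $p'$.
   Context: Let $\Omega$ be a finite set, identify each $\omega$ with a unit vector of $\mathbb{R}^\Omega$ and $\Delta(\Omega)$ with the unit simplex. Let $M$ be the transition matrix of an irreducible Markov chain on $\Omega$, $r:\Omega\to\mathbb{R}$, $\delta\in[0,1)$, $\phi(q)=qM$. $I=\{p:\sum_\omega p(\omega)r(\omega)\ge0\}$, $J=\Delta(\Omega)\setminus I$. $\mathcal{S}(p)$ is the set of Borel probability measures on $\Delta(\Omega)$ with mean $p$; a decomposition $p=a_Iq_I+a_Jq_J$ is identified with the measure giving weight $a_I$ to $q_I$ and $a_J$ to $q_J$. $V_\delta$ is the value of the advisor's problem (at each stage choose $\mu\in\mathcal{S}(p_n)$, draw $q_n\sim\mu$, receive $\mathbf{1}_{\{q_n\in I\}}$, move to $p_{n+1}=\phi(q_n)$, payoff $\mathbb{E}[(1-\delta)\sum_n\delta^{n-1}\mathbf{1}_{\{q_n\in I\}}]$), the unique solution of the dynamic programming equation in the claim. *)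

theory Defs
  imports "HOL-Probability.Probability"
begin

text \<open>Beliefs are vectors in real^'w indexed by the finite state space 'w.
  The transition matrix M is a real^'w^'w with M$i$j the probability i to j.\<close>

definition beliefs :: "(real^'w::finite) set" where
  "beliefs = {p. (\<forall>w. 0 \<le> p$w) \<and> (\<Sum>w\<in>UNIV. p$w) = 1}"

definition stochastic :: "real^'w^'w::finite \<Rightarrow> bool" where
  "stochastic M \<longleftrightarrow> (\<forall>i j. 0 \<le> M$i$j) \<and> (\<forall>i. (\<Sum>j\<in>UNIV. M$i$j) = 1)"

definition irreducible_chain :: "real^'w^'w::finite \<Rightarrow> bool" where
  "irreducible_chain M \<longleftrightarrow> (\<forall>i j. (i, j) \<in> {(a, b). 0 < M$a$b}\<^sup>*)"

definition phi :: "real^'w^'w::finite \<Rightarrow> real^'w \<Rightarrow> real^'w" where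
  "phi M q = q v* M"

definition Iset :: "('w::finite \<Rightarrow> real) \<Rightarrow> (real^'w) set" where
  "Iset r = {p \<in> beliefs. (\<Sum>w\<in>UNIV. p$w * r w) \<ge> 0}"

definition Jset :: "('w::finite \<Rightarrow> real) \<Rightarrow> (real^'w) set" where
  "Jset r = beliefs - Iset r"

definition Splits :: "real^'w::finite \<Rightarrow> (real^'w) measure set" where
  "Splits p = {\<mu>. sets \<mu> = sets borel \<and> prob_space \<mu> \<and> (AE q in \<mu>. q \<in> beliefs)
                  \<and> integrable \<mu> (\<lambda>q. q) \<and> (\<integral>q. q \<partial>\<mu>) = p}"

definition obj :: "real^'w^'w::finite \<Rightarrow> ('w \<Rightarrow> real) \<Rightarrow> real \<Rightarrow> (real^'w \<Rightarrow> real)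
                     \<Rightarrow> (real^'w) measure \<Rightarrow> real" where
  "obj M r \<delta> V \<mu> = (1 - \<delta>) * measure \<mu> (Iset r) + \<delta> * (\<integral>q. V (phi M q) \<partial>\<mu>)"

text \<open>Bounded Borel solutions of the dynamic programming equation on the beliefs,
  normalised to 0 outside the beliefs (so that the solution is unique as a function).\<close>
definition DP_solution :: "real^'w^'w::finite \<Rightarrow> ('w \<Rightarrow> real) \<Rightarrow> real \<Rightarrow> (real^'w \<Rightarrow> real) \<Rightarrow> bool" where
  "DP_solution M r \<delta> V \<longleftrightarrow>
     V \<in> borel_measurable borel \<and> bounded (V ` beliefs) \<and> (\<forall>p. p \<notin> beliefs \<longrightarrow> V p = 0)
     \<and> (\<forall>p\<in>beliefs. V p = (SUP \<mu>\<in>Splits p. obj M r \<delta> V \<mu>))"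

definition Vdelta :: "real^'w^'w::finite \<Rightarrow> ('w \<Rightarrow> real) \<Rightarrow> real \<Rightarrow> (real^'w \<Rightarrow> real)" where
  "Vdelta M r \<delta> = (THE V. DP_solution M r \<delta> V)"

definition two_point :: "real \<Rightarrow> real^'w::finite \<Rightarrow> real^'w \<Rightarrow> (real^'w) measure" where
  "two_point a x y = distr (measure_pmf (map_pmf (\<lambda>b. if b then x else y) (bernoulli_pmf a))) borel (\<lambda>q. q)"

definition optimal_at :: "real^'w^'w::finite \<Rightarrow> ('w \<Rightarrow> real) \<Rightarrow> real \<Rightarrow> real^'w
                           \<Rightarrow> (real^'w) measure \<Rightarrow> bool" where
  "optimal_at M r \<delta> p \<mu> \<longleftrightarrow> \<mu> \<in> Splits p \<and> obj M r \<delta> (Vdelta M r \<delta>) \<mu> = Vdelta M r \<delta> p"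

end

theory Submission
  imports Defs
begin


lemma beliefs_closed: "closed (beliefs :: (real^'w::finite) set)"
  unfolding beliefs_def
  by (intro closed_Collect_conj closed_Collect_all closed_Collect_le closed_Collect_eq continuous_intros)

lemma beliefs_borel[measurable]: "(beliefs :: (real^'w::finite) set) \<in> sets borel"
  using beliefs_closed by (rule borel_closed)

lemma beliefs_comb:
  assumes "x \<in> beliefs" "y \<in> beliefs" "0 \<le> t" "t \<le> 1"
  shows "(1 - t) *\<^sub>R x + t *\<^sub>R y \<in> beliefs"
proof -
  have "(\<Sum>w\<in>UNIV. (1-t) * x$w + t * y$w) = (1-t) * (\<Sum>w\<in>UNIV. x$w) + t * (\<Sum>w\<in>UNIV. y$w)"
    by (simp add: sum.distrib sum_distrib_left)
  also have "\<dots> = 1" using assms unfolding beliefs_def by simp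
  finally show ?thesis using assms unfolding beliefs_def by auto
qed

lemma phi_beliefs:
  assumes "stochastic M" "q \<in> beliefs"
  shows "phi M q \<in> beliefs"
proof -
  have "(\<Sum>j\<in>UNIV. \<Sum>i\<in>UNIV. M$i$j * q$i) = (\<Sum>i\<in>UNIV. q$i * (\<Sum>j\<in>UNIV. M$i$j))"
    by (subst sum.swap) (simp add: sum_distrib_left mult.commute)
  also have "\<dots> = 1" using assms unfolding stochastic_def beliefs_def by simp
  finally show ?thesis using assms unfolding stochastic_def beliefs_def phi_def vector_matrix_mult_def
    by (auto intro!: sum_nonneg simp: mult.commute)
qed

lemma phi_cont: "continuous_on UNIV (phi M)"
  unfolding phi_def vector_matrix_mult_def
  by (intro continuous_on_vec_lambda continuous_intros)

lemma phi_meas[measurable]: "phi M \<in> borel_measurable borel"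
  using phi_cont borel_measurable_continuous_onI by blast

lemma return_Splits:
  assumes "x \<in> beliefs"
  shows "return borel x \<in> Splits x"
proof -
  interpret prob_space "return borel x" by (simp add: prob_space_return)
  show ?thesis
  unfolding Splits_def using assms
  by (auto simp: prob_space_return AE_return integral_return intro!: integrable_const_bound[where B="norm x"])
qed


lemma beliefs_norm: "q \<in> beliefs \<Longrightarrow> norm q \<le> 1"
  using norm_le_l1_cart[of q] unfolding beliefs_def by simp

lemma meas_sets: "sets \<mu> = sets borel \<Longrightarrow> f \<in> borel_measurable borel \<Longrightarrow> f \<in> borel_measurable \<mu>"
  using measurable_cong_sets[of \<mu> borel borel borel] by simp

definition mix :: "real \<Rightarrow> 'a measure \<Rightarrow> 'a measure \<Rightarrow> 'a measure" where
  "mix a \<mu>1 \<mu>2 = measure_pmf (bernoulli_pmf a) \<bind> (\<lambda>b. if b then \<mu>1 else \<mu>2)"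

definition goodm :: "(real^'w::finite) measure \<Rightarrow> bool" where
  "goodm \<mu> \<longleftrightarrow> sets \<mu> = sets borel \<and> prob_space \<mu> \<and> (AE q in \<mu>. q \<in> beliefs)"

lemma Splits_goodm: "\<mu> \<in> Splits p \<Longrightarrow> goodm \<mu>"
  unfolding Splits_def goodm_def by auto

lemma mix_kernel:
  assumes "goodm \<mu>1" "goodm \<mu>2"
  shows "(\<lambda>b. if b then \<mu>1 else \<mu>2) \<in> measurable (measure_pmf (bernoulli_pmf a)) (subprob_algebra borel)"
  using assms unfolding goodm_def by (auto simp: space_subprob_algebra prob_space_imp_subprob_space)

lemma mix_sets: assumes "goodm \<mu>1" "goodm \<mu>2" shows "sets (mix a \<mu>1 \<mu>2) = sets borel"
  unfolding mix_def using assms unfolding goodm_def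
  by (subst sets_bind[where N=borel]) auto

lemma mix_prob: assumes "goodm \<mu>1" "goodm \<mu>2" shows "prob_space (mix a \<mu>1 \<mu>2)"
  unfolding mix_def
  by (rule prob_space.prob_space_bind[OF prob_space_measure_pmf _ mix_kernel[OF assms]])
     (use assms in \<open>auto simp: goodm_def\<close>)

lemma mix_AE: assumes "goodm \<mu>1" "goodm \<mu>2" shows "AE q in mix a \<mu>1 \<mu>2. q \<in> beliefs"
  unfolding mix_def
  by (subst AE_bind[OF mix_kernel[OF assms]]) (use assms in \<open>auto simp: goodm_def\<close>)

lemma mix_goodm: assumes "goodm \<mu>1" "goodm \<mu>2" shows "goodm (mix a \<mu>1 \<mu>2)"
  using mix_sets[OF assms] mix_prob[OF assms] mix_AE[OF assms] unfolding goodm_def by auto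

lemma mix_integral:
  fixes f :: "real^'w::finite \<Rightarrow> real"
  assumes g: "goodm \<mu>1" "goodm \<mu>2" and a: "0 \<le> a" "a \<le> 1"
    and f[measurable]: "f \<in> borel_measurable borel" and B: "\<And>q. q \<in> beliefs \<Longrightarrow> \<bar>f q\<bar> \<le> B"
  shows "integrable (mix a \<mu>1 \<mu>2) f"
    "(\<integral>q. f q \<partial>mix a \<mu>1 \<mu>2) = a * (\<integral>q. f q \<partial>\<mu>1) + (1 - a) * (\<integral>q. f q \<partial>\<mu>2)"
proof -
  define f' where "f' q = indicator beliefs q * f q" for q
  have f'[measurable]: "f' \<in> borel_measurable borel" unfolding f'_def by measurable
  have f'B: "\<bar>f' q\<bar> \<le> \<bar>B\<bar>" for q using B[of q] unfolding f'_def by (auto simp: indicator_def)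
  have ae: "AE q in \<mu>. f q = f' q" if "goodm \<mu>" for \<mu>
    using that unfolding goodm_def f'_def by (auto elim!: AE_mp)
  have K: "(\<lambda>b. if b then \<mu>1 else \<mu>2) \<in> measurable (measure_pmf (bernoulli_pmf a)) (subprob_algebra borel)"
    by (rule mix_kernel[OF g])
  have bnd: "AE b in measure_pmf (bernoulli_pmf a). emeasure (if b then \<mu>1 else \<mu>2) (space (if b then \<mu>1 else \<mu>2)) \<le> ennreal 1"
    using g by (auto simp: goodm_def prob_space.emeasure_space_1)
  have i1: "integrable (mix a \<mu>1 \<mu>2) f'" unfolding mix_def
    by (rule integrable_bind[OF f' _ K measure_pmf.finite_measure_axioms bnd, where B="\<bar>B\<bar>"]) (rule f'B)
  have i2: "(\<integral>q. f' q \<partial>mix a \<mu>1 \<mu>2) = (\<integral>b. (\<integral>q. f' q \<partial>(if b then \<mu>1 else \<mu>2)) \<partial>measure_pmf (bernoulli_pmf a))"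
    unfolding mix_def
    by (rule integral_bind[OF f' _ K measure_pmf.finite_measure_axioms bnd, where B="\<bar>B\<bar>"]) (rule f'B)
  also have "\<dots> = a * (\<integral>q. f' q \<partial>\<mu>1) + (1 - a) * (\<integral>q. f' q \<partial>\<mu>2)"
    by (subst integral_measure_pmf_real[where A=UNIV]) (use a in \<open>auto simp: UNIV_bool\<close>)
  also have "\<dots> = a * (\<integral>q. f q \<partial>\<mu>1) + (1 - a) * (\<integral>q. f q \<partial>\<mu>2)"
  proof -
    have "(\<integral>q. f q \<partial>\<mu>) = (\<integral>q. f' q \<partial>\<mu>)" if gg: "goodm \<mu>" for \<mu>
    proof -
      have ms: "f \<in> borel_measurable \<mu>" "f' \<in> borel_measurable \<mu>"
        using meas_sets[of \<mu>] gg f f' unfolding goodm_def by auto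
      show ?thesis using integral_cong_AE[OF ms ae[OF gg]] .
    qed
    then show ?thesis using g by simp
  qed
  finally have i3: "(\<integral>q. f' q \<partial>mix a \<mu>1 \<mu>2) = \<dots>" .
  have aem: "AE q in mix a \<mu>1 \<mu>2. f q = f' q" by (rule ae[OF mix_goodm[OF g]])
  have ms: "f \<in> borel_measurable (mix a \<mu>1 \<mu>2)" "f' \<in> borel_measurable (mix a \<mu>1 \<mu>2)"
    by (rule meas_sets[OF mix_sets[OF g] f], rule meas_sets[OF mix_sets[OF g] f'])
  show "integrable (mix a \<mu>1 \<mu>2) f"
    using integrable_cong_AE[OF ms aem] i1 by simp
  show "(\<integral>q. f q \<partial>mix a \<mu>1 \<mu>2) = a * (\<integral>q. f q \<partial>\<mu>1) + (1 - a) * (\<integral>q. f q \<partial>\<mu>2)"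
    using integral_cong_AE[OF ms aem] i3 by simp
qed


lemma Iset_closed: "closed (Iset r)"
proof -
  have "Iset r = beliefs \<inter> {p. 0 \<le> (\<Sum>w\<in>UNIV. p$w * r w)}" unfolding Iset_def by auto
  moreover have "closed {p::real^'a. 0 \<le> (\<Sum>w\<in>UNIV. p$w * r w)}"
    by (intro closed_Collect_le continuous_intros)
  ultimately show ?thesis using beliefs_closed by auto
qed

lemma Iset_borel[measurable]: "Iset r \<in> sets borel"
  using Iset_closed by (rule borel_closed)

lemma space_goodm: "goodm \<mu> \<Longrightarrow> space \<mu> = UNIV"
  unfolding goodm_def using sets_eq_imp_space_eq[of \<mu> borel] by simp

lemma mix_measure:
  assumes g: "goodm \<mu>1" "goodm \<mu>2" and a: "0 \<le> a" "a \<le> 1" and A[measurable]: "A \<in> sets borel"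
  shows "measure (mix a \<mu>1 \<mu>2) A = a * measure \<mu>1 A + (1 - a) * measure \<mu>2 A"
proof -
  have "(\<integral>q. indicator A q \<partial>mix a \<mu>1 \<mu>2) = a * (\<integral>q. indicator A q \<partial>\<mu>1) + (1 - a) * (\<integral>q. indicator A q \<partial>\<mu>2)"
    by (rule mix_integral(2)[OF g a, where B=1]) (auto simp: indicator_def)
  then show ?thesis using space_goodm[OF g(1)] space_goodm[OF g(2)] space_goodm[OF mix_goodm[OF g]]
    by simp
qed

lemma comp_le1: "q \<in> beliefs \<Longrightarrow> \<bar>q$w\<bar> \<le> 1"
proof -
  assume q: "q \<in> beliefs"
  have "q$w \<le> (\<Sum>v\<in>UNIV. q$v)"
    by (rule member_le_sum) (use q in \<open>auto simp: beliefs_def\<close>)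
  moreover have "0 \<le> q$w" using q by (simp add: beliefs_def)
  ultimately show ?thesis using q by (simp add: beliefs_def)
qed

lemma goodm_integrable: "goodm \<mu> \<Longrightarrow> integrable \<mu> (\<lambda>q. q)"
proof -
  assume g: "goodm \<mu>"
  have fm: "finite_measure \<mu>" using g by (simp add: goodm_def prob_space_def)
  have ae: "AE q in \<mu>. norm q \<le> 1"
  proof -
    have "AE q in \<mu>. q \<in> beliefs" using g by (simp add: goodm_def)
    then show ?thesis by (rule AE_mp) (auto intro: beliefs_norm)
  qed
  have ms: "(\<lambda>q. q) \<in> borel_measurable \<mu>"
    by (rule meas_sets) (use g in \<open>auto simp: goodm_def\<close>)
  show ?thesis by (rule finite_measure.integrable_const_bound[OF fm ae ms])
qed

lemma mix_Splits:
  assumes s: "\<mu>1 \<in> Splits p1" "\<mu>2 \<in> Splits p2" and a: "0 \<le> a" "a \<le> 1"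
  shows "mix a \<mu>1 \<mu>2 \<in> Splits (a *\<^sub>R p1 + (1 - a) *\<^sub>R p2)"
proof -
  have g: "goodm \<mu>1" "goodm \<mu>2" using s by (auto intro: Splits_goodm)
  have gm: "goodm (mix a \<mu>1 \<mu>2)" using mix_goodm[OF g] .
  have "(\<integral>q. q \<partial>mix a \<mu>1 \<mu>2) $ w = (a *\<^sub>R p1 + (1 - a) *\<^sub>R p2) $ w" for w
  proof -
    have "(\<integral>q. q \<partial>mix a \<mu>1 \<mu>2) $ w = (\<integral>q. q $ w \<partial>mix a \<mu>1 \<mu>2)"
      by (rule integral_bounded_linear[OF bounded_linear_vec_nth goodm_integrable[OF gm], symmetric])
    also have "\<dots> = a * (\<integral>q. q $ w \<partial>\<mu>1) + (1 - a) * (\<integral>q. q $ w \<partial>\<mu>2)"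
      by (rule mix_integral(2)[OF g a, where B=1]) (auto intro: comp_le1)
    also have "(\<integral>q. q $ w \<partial>\<mu>1) = p1 $ w"
      using integral_bounded_linear[OF bounded_linear_vec_nth goodm_integrable[OF g(1)], of w] s(1)
      by (simp add: Splits_def)
    also have "(\<integral>q. q $ w \<partial>\<mu>2) = p2 $ w"
      using integral_bounded_linear[OF bounded_linear_vec_nth goodm_integrable[OF g(2)], of w] s(2)
      by (simp add: Splits_def)
    finally show ?thesis by simp
  qed
  then have "(\<integral>q. q \<partial>mix a \<mu>1 \<mu>2) = a *\<^sub>R p1 + (1 - a) *\<^sub>R p2" by (simp add: vec_eq_iff)
  then show ?thesis using gm goodm_integrable[OF gm] unfolding Splits_def goodm_def by auto
qed

lemma obj_mix:
  assumes "stochastic M" and g: "goodm \<mu>1" "goodm \<mu>2" and a: "0 \<le> a" "a \<le> 1"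
    and V[measurable]: "V \<in> borel_measurable borel" and B: "\<And>q. q \<in> beliefs \<Longrightarrow> \<bar>V q\<bar> \<le> B"
  shows "obj M r \<delta> V (mix a \<mu>1 \<mu>2) = a * obj M r \<delta> V \<mu>1 + (1 - a) * obj M r \<delta> V \<mu>2"
proof -
  have e1: "(\<integral>q. V (phi M q) \<partial>mix a \<mu>1 \<mu>2) = a * (\<integral>q. V (phi M q) \<partial>\<mu>1) + (1 - a) * (\<integral>q. V (phi M q) \<partial>\<mu>2)"
    by (rule mix_integral(2)[OF g a, where B=B]) (use B phi_beliefs[OF assms(1)] in auto)
  show ?thesis unfolding obj_def e1 mix_measure[OF g a Iset_borel, of r]
    by (simp add: algebra_simps)
qed


lemma two_point_mix: "two_point a x y = mix a (return borel x) (return borel y)"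
proof -
  have e: "(\<lambda>b. if b then return borel x else return borel y) = (\<lambda>b. return borel (if b then x else y))"
    by auto
  have "mix a (return borel x) (return borel y) = distr (measure_pmf (bernoulli_pmf a)) borel (\<lambda>b. if b then x else y)"
    unfolding mix_def e by (rule bind_return_distr') auto
  also have "\<dots> = two_point a x y"
    unfolding two_point_def map_pmf_rep_eq
    by (subst distr_distr) (auto simp: comp_def)
  finally show ?thesis ..
qed

lemma goodm_return: "x \<in> beliefs \<Longrightarrow> goodm (return borel x)"
  using return_Splits Splits_goodm by blast

lemma two_point_Splits:
  assumes "x \<in> beliefs" "y \<in> beliefs" "0 \<le> a" "a \<le> 1"
  shows "two_point a x y \<in> Splits (a *\<^sub>R x + (1 - a) *\<^sub>R y)"
  unfolding two_point_mix by (rule mix_Splits[OF return_Splits return_Splits]) (use assms in auto)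

lemma obj_return:
  assumes "x \<in> beliefs" and V[measurable]: "V \<in> borel_measurable borel"
  shows "obj M r \<delta> V (return borel x) = (1 - \<delta>) * (if x \<in> Iset r then 1 else 0) + \<delta> * V (phi M x)"
proof -
  have "(\<integral>q. V (phi M q) \<partial>return borel x) = V (phi M x)"
    by (rule integral_return) auto
  then show ?thesis unfolding obj_def by (simp add: measure_return)
qed



definition concave_b :: "(real^'w::finite \<Rightarrow> real) \<Rightarrow> bool" where
  "concave_b V \<longleftrightarrow> (\<forall>x\<in>beliefs. \<forall>y\<in>beliefs. \<forall>t. 0 \<le> t \<and> t \<le> 1 \<longrightarrow>
      (1 - t) * V x + t * V y \<le> V ((1 - t) *\<^sub>R x + t *\<^sub>R y))"

definition CC :: "(real^'w::finite \<Rightarrow> real) set" where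
  "CC = {V. (\<forall>p. 0 \<le> V p \<and> V p \<le> 1) \<and> (\<forall>p. p \<notin> beliefs \<longrightarrow> V p = 0) \<and> concave_b V}"

lemma conc_lsc:
  assumes V: "V \<in> CC" and p: "p \<in> beliefs"
  shows "\<exists>m>0. \<forall>q\<in>beliefs. dist q p < m \<longrightarrow> V p - dist q p / m \<le> V q"
proof -
  define P where "P = {p$w | w. 0 < p$w}"
  have fin: "finite P" unfolding P_def by simp
  have ne: "P \<noteq> {}"
  proof
    assume "P = {}"
    then have "\<forall>w. p$w = 0" using p unfolding P_def beliefs_def by (force simp: order.order_iff_strict)
    then show False using p unfolding beliefs_def by simp
  qed
  define m where "m = Min P"
  have mpos: "m > 0" unfolding m_def using fin ne by (auto simp: P_def)
  have mle: "m \<le> p$w" if "0 < p$w" for w unfolding m_def using fin that by (auto simp: P_def intro!: Min_le)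
  have conc: "concave_b V" and b01: "\<And>x. 0 \<le> V x \<and> V x \<le> 1" using V by (auto simp: CC_def)
  show ?thesis
  proof (intro exI[of _ m] conjI mpos ballI impI)
    fix q assume q: "q \<in> beliefs" and d: "dist q p < m"
    show "V p - dist q p / m \<le> V q"
    proof (cases "q = p")
      case True then show ?thesis by simp
    next
      case False
      define s where "s = dist q p / m"
      have s0: "0 < s" using False mpos by (simp add: s_def)
      have s1: "s < 1" using d mpos by (simp add: s_def)
      define z where "z = (1 / s) *\<^sub>R (q - (1 - s) *\<^sub>R p)"
      have zc: "z$w = (q$w - (1 - s) * p$w) / s" for w by (simp add: z_def)
      have zpos: "0 \<le> z$w" for w
      proof (cases "p$w = 0")
        case True then show ?thesis using q s0 by (simp add: zc beliefs_def)
      next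
        case False
        have "0 \<le> p$w" using p by (simp add: beliefs_def)
        with False have pw: "0 < p$w" by simp
        have "p$w - q$w \<le> dist q p"
          using component_le_norm_cart[of "q - p" w] by (simp add: dist_norm)
        also have "\<dots> = s * m" using mpos by (simp add: s_def)
        also have "\<dots> \<le> s * p$w" using mle[OF pw] s0 by simp
        finally have "(1 - s) * p$w \<le> q$w" by (simp add: algebra_simps)
        then show ?thesis using s0 by (simp add: zc)
      qed
      have "(\<Sum>w\<in>UNIV. z$w) = ((\<Sum>w\<in>UNIV. q$w) - (1 - s) * (\<Sum>w\<in>UNIV. p$w)) / s"
        by (simp add: zc sum_divide_distrib[symmetric] sum_subtractf sum_distrib_left)
      also have "\<dots> = 1" using p q s0 by (simp add: beliefs_def)
      finally have zb: "z \<in> beliefs" using zpos by (simp add: beliefs_def)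
      have qeq: "q = (1 - s) *\<^sub>R p + s *\<^sub>R z"
        using s0 by (simp add: z_def algebra_simps)
      have "(1 - s) * V p + s * V z \<le> V q"
        using conc p zb s0 s1 qeq unfolding concave_b_def by force
      moreover have "0 \<le> V z" "V p \<le> 1" using b01 by auto
      moreover have "s * V p \<le> s" "0 \<le> s * V z"
        using mult_left_le[of "V p" s] mult_nonneg_nonneg[of s "V z"] b01 s0 by (auto simp: mult.commute)
      ultimately have "V p - s \<le> V q" by (simp add: algebra_simps)
      then show ?thesis by (simp add: s_def)
    qed
  qed
qed

lemma CC_borel:
  assumes V: "V \<in> CC"
  shows "V \<in> borel_measurable borel"
proof (subst borel_measurable_iff_greater, intro allI)
  fix c :: real
  define S where "S = {x \<in> beliefs. c < V x}"
  have "openin (top_of_set beliefs) S"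
    unfolding openin_euclidean_subtopology_iff
  proof (intro conjI ballI)
    show "S \<subseteq> beliefs" by (auto simp: S_def)
    fix x assume x: "x \<in> S"
    then have xb: "x \<in> beliefs" and cx: "c < V x" by (auto simp: S_def)
    obtain m where m: "m > 0" "\<And>q. q \<in> beliefs \<Longrightarrow> dist q x < m \<Longrightarrow> V x - dist q x / m \<le> V q"
      using conc_lsc[OF V xb] by blast
    show "\<exists>e>0. \<forall>x'\<in>beliefs. dist x' x < e \<longrightarrow> x' \<in> S"
    proof (intro exI[of _ "min m ((V x - c) * m)"] conjI ballI impI)
      show "0 < min m ((V x - c) * m)" using m cx by simp
      fix q assume q: "q \<in> beliefs" "dist q x < min m ((V x - c) * m)"
      then have "dist q x / m < V x - c" using m by (simp add: divide_less_eq)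
      then show "q \<in> S" using m(2)[OF q(1)] q unfolding S_def by force
    qed
  qed
  then obtain T where T: "open T" "S = beliefs \<inter> T" by (auto simp: openin_open)
  have "{w \<in> space borel. c < V w} = S \<union> (if c < 0 then - beliefs else {})"
    using V unfolding S_def CC_def by auto
  also have "\<dots> \<in> sets borel" using T beliefs_borel by auto
  finally show "{w \<in> space borel. c < V w} \<in> sets borel" .
qed


definition Top :: "real^'w::finite^'w \<Rightarrow> ('w \<Rightarrow> real) \<Rightarrow> real \<Rightarrow> (real^'w \<Rightarrow> real) \<Rightarrow> real^'w \<Rightarrow> real" where
  "Top M r \<delta> V p = (if p \<in> beliefs then (SUP \<mu>\<in>Splits p. obj M r \<delta> V \<mu>) else 0)"

definition okV :: "(real^'w::finite \<Rightarrow> real) \<Rightarrow> real \<Rightarrow> bool" where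
  "okV V B \<longleftrightarrow> V \<in> borel_measurable borel \<and> (\<forall>q\<in>beliefs. \<bar>V q\<bar> \<le> B)"

lemma Splits_ne: "p \<in> beliefs \<Longrightarrow> Splits p \<noteq> {}"
  using return_Splits by blast

lemma CC_okV: "V \<in> CC \<Longrightarrow> okV V 1"
  using CC_borel[of V] unfolding okV_def CC_def by auto

context
  fixes M :: "real^'w::finite^'w" and r :: "'w \<Rightarrow> real" and \<delta> :: real
  assumes sto: "stochastic M" and d0: "0 \<le> \<delta>" and d1: "\<delta> < 1"
begin

lemma obj_integrable:
  assumes g: "goodm \<mu>" and V: "okV V B"
  shows "integrable \<mu> (\<lambda>q. V (phi M q))"
proof -
  have fm: "finite_measure \<mu>" using g by (simp add: goodm_def prob_space_def)
  have Vm[measurable]: "V \<in> borel_measurable borel" using V by (simp add: okV_def)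
  have ae: "AE q in \<mu>. norm (V (phi M q)) \<le> B"
  proof -
    have "AE q in \<mu>. q \<in> beliefs" using g by (simp add: goodm_def)
    then show ?thesis by (rule AE_mp) (use V phi_beliefs[OF sto] in \<open>auto simp: okV_def\<close>)
  qed
  have ms: "(\<lambda>q. V (phi M q)) \<in> borel_measurable \<mu>"
    by (rule meas_sets) (use g in \<open>auto simp: goodm_def\<close>)
  show ?thesis by (rule finite_measure.integrable_const_bound[OF fm ae ms])
qed

lemma obj_range:
  assumes g: "goodm \<mu>" and V: "okV V B" and lo: "\<And>q. q \<in> beliefs \<Longrightarrow> lo \<le> V q \<and> V q \<le> hi"
  shows "\<delta> * lo \<le> obj M r \<delta> V \<mu> \<and> obj M r \<delta> V \<mu> \<le> (1 - \<delta>) + \<delta> * hi"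
proof -
  interpret P: prob_space \<mu> using g by (simp add: goodm_def)
  have aeb: "AE q in \<mu>. q \<in> beliefs" using g by (simp add: goodm_def)
  have i: "integrable \<mu> (\<lambda>q. V (phi M q))" by (rule obj_integrable[OF g V])
  have "lo \<le> (\<integral>q. V (phi M q) \<partial>\<mu>)"
    by (rule P.integral_ge_const[OF i]) (rule AE_mp[OF aeb], use lo phi_beliefs[OF sto] in auto)
  moreover have "(\<integral>q. V (phi M q) \<partial>\<mu>) \<le> hi"
    by (rule P.integral_le_const[OF i]) (rule AE_mp[OF aeb], use lo phi_beliefs[OF sto] in auto)
  moreover have "0 \<le> measure \<mu> (Iset r)" "measure \<mu> (Iset r) \<le> 1" by auto
  ultimately have "\<delta> * lo \<le> \<delta> * (\<integral>q. V (phi M q) \<partial>\<mu>)" "\<delta> * (\<integral>q. V (phi M q) \<partial>\<mu>) \<le> \<delta> * hi"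
    "0 \<le> (1 - \<delta>) * measure \<mu> (Iset r)" "(1 - \<delta>) * measure \<mu> (Iset r) \<le> (1 - \<delta>)"
    using d0 d1 by (auto intro!: mult_left_mono simp: mult_left_le)
  then show ?thesis unfolding obj_def by linarith
qed

lemma obj_contr:
  assumes g: "goodm \<mu>" and V: "okV V B" and W: "okV W B'" and d: "\<And>q. q \<in> beliefs \<Longrightarrow> V q \<le> W q + d"
  shows "obj M r \<delta> V \<mu> \<le> obj M r \<delta> W \<mu> + \<delta> * d"
proof -
  interpret P: prob_space \<mu> using g by (simp add: goodm_def)
  have aeb: "AE q in \<mu>. q \<in> beliefs" using g by (simp add: goodm_def)
  have iV: "integrable \<mu> (\<lambda>q. V (phi M q))" by (rule obj_integrable[OF g V])
  have iW: "integrable \<mu> (\<lambda>q. W (phi M q))" by (rule obj_integrable[OF g W])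
  have "(\<integral>q. V (phi M q) \<partial>\<mu>) \<le> (\<integral>q. W (phi M q) + d \<partial>\<mu>)"
  proof (rule integral_mono_AE[OF iV Bochner_Integration.integrable_add[OF iW]])
    show "integrable \<mu> (\<lambda>x. d)" by simp
    show "AE x in \<mu>. V (phi M x) \<le> W (phi M x) + d"
      by (rule AE_mp[OF aeb]) (use d phi_beliefs[OF sto] in auto)
  qed
  also have "\<dots> = (\<integral>q. W (phi M q) \<partial>\<mu>) + d"
    using iW by (simp add: P.prob_space)
  finally have "\<delta> * (\<integral>q. V (phi M q) \<partial>\<mu>) \<le> \<delta> * ((\<integral>q. W (phi M q) \<partial>\<mu>) + d)"
    using d0 by (rule mult_left_mono)
  then show ?thesis unfolding obj_def by (simp add: algebra_simps)
qed

lemma bdd_obj: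
  assumes V: "okV V B"
  shows "bdd_above (obj M r \<delta> V ` Splits p)"
proof -
  have B: "\<And>q. q \<in> beliefs \<Longrightarrow> -B \<le> V q \<and> V q \<le> B" using V by (auto simp: okV_def abs_le_iff)
  show ?thesis
    by (rule bdd_aboveI[where M="(1 - \<delta>) + \<delta> * B"])
       (use obj_range[OF Splits_goodm V B] in auto)
qed

lemma Top_upper:
  assumes V: "okV V B" and p: "p \<in> beliefs" and mu: "\<mu> \<in> Splits p"
  shows "obj M r \<delta> V \<mu> \<le> Top M r \<delta> V p"
  unfolding Top_def using p by (simp add: cSUP_upper[OF mu bdd_obj[OF V]])

lemma Top_least:
  assumes p: "p \<in> beliefs" and K: "\<And>\<mu>. \<mu> \<in> Splits p \<Longrightarrow> obj M r \<delta> V \<mu> \<le> K"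
  shows "Top M r \<delta> V p \<le> K"
  unfolding Top_def using p by (simp add: cSUP_least[OF Splits_ne[OF p] K])

lemma Top_contr:
  assumes V: "okV V B" and W: "okV W B'" and d: "\<And>q. q \<in> beliefs \<Longrightarrow> V q \<le> W q + d"
    and p: "p \<in> beliefs"
  shows "Top M r \<delta> V p \<le> Top M r \<delta> W p + \<delta> * d"
proof (rule Top_least[OF p])
  fix \<mu> assume mu: "\<mu> \<in> Splits p"
  have "obj M r \<delta> V \<mu> \<le> obj M r \<delta> W \<mu> + \<delta> * d" by (rule obj_contr[OF Splits_goodm[OF mu] V W d])
  also have "\<dots> \<le> Top M r \<delta> W p + \<delta> * d" using Top_upper[OF W p mu] by simp
  finally show "obj M r \<delta> V \<mu> \<le> Top M r \<delta> W p + \<delta> * d" .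
qed

lemma sup_scale:
  fixes f :: "'a \<Rightarrow> real"
  assumes "A \<noteq> {}" "bdd_above (f ` A)" "0 \<le> c" "\<And>x. x \<in> A \<Longrightarrow> c * f x \<le> K"
  shows "c * (SUP x\<in>A. f x) \<le> K"
proof (cases "c = 0")
  case True
  then show ?thesis using assms(1,4) by force
next
  case False
  then have c: "c > 0" using assms(3) by simp
  have "(SUP x\<in>A. f x) \<le> K / c"
    by (rule cSUP_least[OF assms(1)]) (use assms(4) c in \<open>simp add: pos_le_divide_eq mult.commute\<close>)
  then show ?thesis using c by (simp add: pos_le_divide_eq mult.commute)
qed

lemma Top_CC:
  assumes V: "V \<in> CC"
  shows "Top M r \<delta> V \<in> CC"
proof -
  have ok: "okV V 1" by (rule CC_okV[OF V])
  have b: "\<And>q. q \<in> beliefs \<Longrightarrow> 0 \<le> V q \<and> V q \<le> 1" using V by (auto simp: CC_def)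
  have rng: "0 \<le> obj M r \<delta> V \<mu> \<and> obj M r \<delta> V \<mu> \<le> 1" if "\<mu> \<in> Splits p" for \<mu> p
    using obj_range[OF Splits_goodm[OF that] ok b] d0 by auto
  have bnds: "0 \<le> Top M r \<delta> V p \<and> Top M r \<delta> V p \<le> 1" for p
  proof (cases "p \<in> beliefs")
    case True
    have "0 \<le> obj M r \<delta> V (return borel p)" using rng[OF return_Splits[OF True]] by simp
    also have "\<dots> \<le> Top M r \<delta> V p" by (rule Top_upper[OF ok True return_Splits[OF True]])
    finally show ?thesis using Top_least[OF True, of V 1] rng by auto
  qed (simp add: Top_def)
  have conc: "concave_b (Top M r \<delta> V)"
    unfolding concave_b_def
  proof (intro ballI allI impI)
    fix x y :: "real^'w" and t :: real
    assume x: "x \<in> beliefs" and y: "y \<in> beliefs" and t: "0 \<le> t \<and> t \<le> 1"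
    define z where "z = (1 - t) *\<^sub>R x + t *\<^sub>R y"
    have z: "z \<in> beliefs" unfolding z_def using beliefs_comb x y t by blast
    have key: "(1 - t) * obj M r \<delta> V \<mu>1 + t * obj M r \<delta> V \<mu>2 \<le> Top M r \<delta> V z"
      if m1: "\<mu>1 \<in> Splits x" and m2: "\<mu>2 \<in> Splits y" for \<mu>1 \<mu>2
    proof -
      have "mix (1 - t) \<mu>1 \<mu>2 \<in> Splits ((1 - t) *\<^sub>R x + (1 - (1 - t)) *\<^sub>R y)"
        by (rule mix_Splits[OF m1 m2]) (use t in auto)
      then have mz: "mix (1 - t) \<mu>1 \<mu>2 \<in> Splits z" by (simp add: z_def)
      have "obj M r \<delta> V (mix (1 - t) \<mu>1 \<mu>2) = (1 - t) * obj M r \<delta> V \<mu>1 + (1 - (1 - t)) * obj M r \<delta> V \<mu>2"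
        by (rule obj_mix[OF sto Splits_goodm[OF m1] Splits_goodm[OF m2], where B=1])
           (use t ok in \<open>auto simp: okV_def\<close>)
      then show ?thesis using Top_upper[OF ok z mz] by simp
    qed
    have step: "(1 - t) * obj M r \<delta> V \<mu>1 + t * Top M r \<delta> V y \<le> Top M r \<delta> V z"
      if m1: "\<mu>1 \<in> Splits x" for \<mu>1
    proof -
      have "t * (SUP \<mu>\<in>Splits y. obj M r \<delta> V \<mu>) \<le> Top M r \<delta> V z - (1 - t) * obj M r \<delta> V \<mu>1"
        by (rule sup_scale[OF Splits_ne[OF y] bdd_obj[OF ok]]) (use t key[OF m1] in \<open>auto simp: algebra_simps\<close>)
      then show ?thesis using y by (simp add: Top_def)
    qed
    have "(1 - t) * (SUP \<mu>\<in>Splits x. obj M r \<delta> V \<mu>) \<le> Top M r \<delta> V z - t * Top M r \<delta> V y"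
      by (rule sup_scale[OF Splits_ne[OF x] bdd_obj[OF ok]]) (use t step in \<open>auto simp: algebra_simps\<close>)
    then show "(1 - t) * Top M r \<delta> V x + t * Top M r \<delta> V y \<le> Top M r \<delta> V ((1 - t) *\<^sub>R x + t *\<^sub>R y)"
      using x by (simp add: Top_def z_def algebra_simps)
  qed
  show ?thesis using bnds conc unfolding CC_def by (auto simp: Top_def)
qed

lemma Top_abs:
  assumes V: "V \<in> CC" and W: "W \<in> CC" and d: "\<And>q. \<bar>V q - W q\<bar> \<le> d"
  shows "\<bar>Top M r \<delta> V q - Top M r \<delta> W q\<bar> \<le> \<delta> * d"
proof (cases "q \<in> beliefs")
  case True
  have d1': "V q' \<le> W q' + d" "W q' \<le> V q' + d" for q' using d[of q'] by (auto simp: abs_le_iff)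
  have "Top M r \<delta> V q \<le> Top M r \<delta> W q + \<delta> * d"
    by (rule Top_contr[OF CC_okV[OF V] CC_okV[OF W] d1'(1) True])
  moreover have "Top M r \<delta> W q \<le> Top M r \<delta> V q + \<delta> * d"
    by (rule Top_contr[OF CC_okV[OF W] CC_okV[OF V] d1'(2) True])
  ultimately show ?thesis by auto
next
  case False
  have "0 \<le> d" using d[of q] by simp
  then show ?thesis using False d0 by (simp add: Top_def)
qed

lemma zero_lim:
  fixes x c :: real
  assumes "\<And>n. x \<le> c * \<delta> ^ n"
  shows "x \<le> 0"
proof -
  have "(\<lambda>n. c * \<delta> ^ n) \<longlonglongrightarrow> c * 0"
    by (intro tendsto_intros) (use d0 d1 in auto)
  then show ?thesis using assms by (intro LIMSEQ_le_const) auto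
qed

definition iterT :: "nat \<Rightarrow> real^'w \<Rightarrow> real" where
  "iterT n = (Top M r \<delta> ^^ n) (\<lambda>_. 0)"

lemma iterT_Suc: "iterT (Suc n) = Top M r \<delta> (iterT n)"
  by (simp add: iterT_def)

lemma zero_CC: "(\<lambda>_. 0) \<in> CC"
  by (simp add: CC_def concave_b_def)

lemma iterT_CC: "iterT n \<in> CC"
  by (induction n) (simp_all add: iterT_Suc zero_CC Top_CC, simp add: iterT_def zero_CC)

lemma iterT_b: "0 \<le> iterT n q \<and> iterT n q \<le> 1"
  using iterT_CC[of n] by (simp add: CC_def)

lemma iterT_diff: "\<bar>iterT (Suc n) q - iterT n q\<bar> \<le> \<delta> ^ n"
proof (induction n arbitrary: q)
  case 0
  then show ?case using iterT_b[of 1 q] by (simp add: iterT_def)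
next
  case (Suc n)
  have "\<bar>Top M r \<delta> (iterT (Suc n)) q - Top M r \<delta> (iterT n) q\<bar> \<le> \<delta> * \<delta> ^ n"
    by (rule Top_abs[OF iterT_CC iterT_CC Suc.IH])
  then show ?case by (simp add: iterT_Suc[of "Suc n"] iterT_Suc[of n])
qed

lemma iterT_tail: "\<bar>iterT (n + k) q - iterT n q\<bar> \<le> \<delta> ^ n * (1 - \<delta> ^ k) / (1 - \<delta>)"
proof (induction k)
  case 0
  then show ?case by simp
next
  case (Suc k)
  have "\<bar>iterT (n + Suc k) q - iterT n q\<bar> \<le> \<bar>iterT (Suc (n + k)) q - iterT (n + k) q\<bar> + \<bar>iterT (n + k) q - iterT n q\<bar>"
    by simp
  also have "\<dots> \<le> \<delta> ^ (n + k) + \<delta> ^ n * (1 - \<delta> ^ k) / (1 - \<delta>)"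
    using iterT_diff[of "n + k" q] Suc.IH by linarith
  also have "\<dots> = \<delta> ^ n * (1 - \<delta> ^ Suc k) / (1 - \<delta>)"
    using d1 by (simp add: field_simps power_add)
  finally show ?case .
qed

definition Vs :: "real^'w \<Rightarrow> real" where
  "Vs q = (\<Sum>k. iterT (Suc k) q - iterT k q)"

lemma Vs_lim: "(\<lambda>n. iterT n q) \<longlonglongrightarrow> Vs q"
proof -
  have sm: "summable (\<lambda>k. iterT (Suc k) q - iterT k q)"
    by (rule summable_comparison_test'[OF summable_geometric[of \<delta>], where N=0])
       (use d0 d1 iterT_diff in auto)
  have "(\<lambda>n. \<Sum>k<n. iterT (Suc k) q - iterT k q) \<longlonglongrightarrow> Vs q"
    unfolding Vs_def by (rule summable_LIMSEQ[OF sm])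
  moreover have "(\<Sum>k<n. iterT (Suc k) q - iterT k q) = iterT n q" for n
    by (subst sum_lessThan_telescope) (simp add: iterT_def)
  ultimately show ?thesis by simp
qed

lemma Vs_tail: "\<bar>Vs q - iterT n q\<bar> \<le> \<delta> ^ n / (1 - \<delta>)"
proof (rule LIMSEQ_le_const2)
  show "(\<lambda>k. \<bar>iterT (k + n) q - iterT n q\<bar>) \<longlonglongrightarrow> \<bar>Vs q - iterT n q\<bar>"
    by (intro tendsto_intros LIMSEQ_ignore_initial_segment Vs_lim)
  have "\<bar>iterT (k + n) q - iterT n q\<bar> \<le> \<delta> ^ n / (1 - \<delta>)" for k
  proof -
    have "\<delta> ^ n * (1 - \<delta> ^ k) / (1 - \<delta>) \<le> \<delta> ^ n / (1 - \<delta>)"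
      using d0 d1 by (intro divide_right_mono) (auto intro!: mult_left_le simp: zero_le_power)
    then show ?thesis using iterT_tail[of n k q] by (simp add: add.commute)
  qed
  then show "\<exists>N. \<forall>k\<ge>N. \<bar>iterT (k + n) q - iterT n q\<bar> \<le> \<delta> ^ n / (1 - \<delta>)" by blast
qed

lemma Vs_CC: "Vs \<in> CC"
proof -
  have b: "0 \<le> Vs q \<and> Vs q \<le> 1" for q
    using LIMSEQ_le_const[OF Vs_lim[of q], of 0] LIMSEQ_le_const2[OF Vs_lim[of q], of 1] iterT_b by auto
  have z: "Vs q = 0" if "q \<notin> beliefs" for q
  proof -
    have "iterT n q = 0" for n using iterT_CC[of n] that by (simp add: CC_def)
    then show ?thesis using Vs_lim[of q] LIMSEQ_unique[OF _ tendsto_const] by simp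
  qed
  have c: "concave_b Vs" unfolding concave_b_def
  proof (intro ballI allI impI)
    fix x y :: "real^'w" and t :: real
    assume x: "x \<in> beliefs" and y: "y \<in> beliefs" and t: "0 \<le> t \<and> t \<le> 1"
    have "(\<lambda>n. (1 - t) * iterT n x + t * iterT n y - iterT n ((1 - t) *\<^sub>R x + t *\<^sub>R y))
      \<longlonglongrightarrow> (1 - t) * Vs x + t * Vs y - Vs ((1 - t) *\<^sub>R x + t *\<^sub>R y)"
      by (intro tendsto_intros Vs_lim)
    moreover have "(1 - t) * iterT n x + t * iterT n y - iterT n ((1 - t) *\<^sub>R x + t *\<^sub>R y) \<le> 0" for n
      using iterT_CC[of n] x y t unfolding CC_def concave_b_def by force
    ultimately have "(1 - t) * Vs x + t * Vs y - Vs ((1 - t) *\<^sub>R x + t *\<^sub>R y) \<le> 0"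
      by (intro LIMSEQ_le_const2) auto
    then show "(1 - t) * Vs x + t * Vs y \<le> Vs ((1 - t) *\<^sub>R x + t *\<^sub>R y)" by simp
  qed
  show ?thesis using b z c by (simp add: CC_def)
qed

lemma Vs_fix: "Top M r \<delta> Vs q = Vs q"
proof -
  have "\<bar>Top M r \<delta> Vs q - Vs q\<bar> \<le> (2 / (1 - \<delta>)) * \<delta> ^ n" for n
  proof -
    define X where "X = \<delta> ^ Suc n / (1 - \<delta>)"
    have "\<bar>Top M r \<delta> Vs q - Top M r \<delta> (iterT n) q\<bar> \<le> \<delta> * (\<delta> ^ n / (1 - \<delta>))"
      by (rule Top_abs[OF Vs_CC iterT_CC Vs_tail])
    then have e1: "\<bar>Top M r \<delta> Vs q - iterT (Suc n) q\<bar> \<le> X" by (simp add: X_def iterT_Suc)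
    have e2: "\<bar>Vs q - iterT (Suc n) q\<bar> \<le> X" unfolding X_def by (rule Vs_tail)
    have "\<delta> ^ Suc n \<le> \<delta> ^ n" using d0 d1 by (simp add: mult_left_le_one_le)
    then have "X \<le> \<delta> ^ n / (1 - \<delta>)" unfolding X_def using d1 by (intro divide_right_mono) auto
    then have "2 * X \<le> (2 / (1 - \<delta>)) * \<delta> ^ n" by simp
    moreover have "\<bar>Top M r \<delta> Vs q - Vs q\<bar> \<le> 2 * X" using e1 e2 by (simp add: abs_le_iff)
    ultimately show ?thesis by linarith
  qed
  then have "\<bar>Top M r \<delta> Vs q - Vs q\<bar> \<le> 0" by (rule zero_lim)
  then show ?thesis by simp
qed

lemma Vs_DP: "DP_solution M r \<delta> Vs"
proof -
  have "bounded (Vs ` beliefs)" unfolding bounded_iff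
    by (rule exI[of _ 1]) (use Vs_CC in \<open>auto simp: CC_def\<close>)
  moreover have "\<forall>p\<in>beliefs. Vs p = (SUP \<mu>\<in>Splits p. obj M r \<delta> Vs \<mu>)"
    using Vs_fix by (metis Top_def)
  ultimately show ?thesis unfolding DP_solution_def using CC_borel[OF Vs_CC] Vs_CC
    by (auto simp: CC_def)
qed

lemma DP_unique:
  assumes W: "DP_solution M r \<delta> W"
  shows "W = Vs"
proof -
  obtain B where B: "\<forall>x\<in>beliefs. \<bar>W x\<bar> \<le> B"
    using W unfolding DP_solution_def bounded_iff by auto
  have okW: "okV W B" using W B by (simp add: okV_def DP_solution_def)
  have okVs: "okV Vs 1" by (rule CC_okV[OF Vs_CC])
  have Wfix: "Top M r \<delta> W q = W q" for q using W by (auto simp: DP_solution_def Top_def)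
  have Vs0: "Vs q = 0" if "q \<notin> beliefs" for q using Vs_CC that by (simp add: CC_def)
  have W0: "W q = 0" if "q \<notin> beliefs" for q using W that by (simp add: DP_solution_def)
  have main: "\<bar>W q - Vs q\<bar> \<le> (\<bar>B\<bar> + 1) * \<delta> ^ n" for n q
  proof (induction n arbitrary: q)
    case 0
    show ?case
    proof (cases "q \<in> beliefs")
      case True
      then have "\<bar>W q\<bar> \<le> \<bar>B\<bar>" "\<bar>Vs q\<bar> \<le> 1" using B Vs_CC by (auto simp: CC_def)
      then show ?thesis by simp
    qed (simp add: Vs0 W0)
  next
    case (Suc n)
    show ?case
    proof (cases "q \<in> beliefs")
      case True
      have d1': "W q' \<le> Vs q' + (\<bar>B\<bar> + 1) * \<delta> ^ n" "Vs q' \<le> W q' + (\<bar>B\<bar> + 1) * \<delta> ^ n" for q'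
        using Suc.IH[of q'] by (auto simp: abs_le_iff)
      have "Top M r \<delta> W q \<le> Top M r \<delta> Vs q + \<delta> * ((\<bar>B\<bar> + 1) * \<delta> ^ n)"
        by (rule Top_contr[OF okW okVs d1'(1) True])
      moreover have "Top M r \<delta> Vs q \<le> Top M r \<delta> W q + \<delta> * ((\<bar>B\<bar> + 1) * \<delta> ^ n)"
        by (rule Top_contr[OF okVs okW d1'(2) True])
      ultimately show ?thesis using Wfix[of q] Vs_fix[of q] by (simp add: abs_le_iff algebra_simps)
    qed (use d0 in \<open>simp add: Vs0 W0\<close>)
  qed
  have "\<bar>W q - Vs q\<bar> \<le> 0" for q by (rule zero_lim[OF main])
  then show ?thesis by (auto intro!: ext)
qed

lemma Vdelta_eq: "Vdelta M r \<delta> = Vs"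
  unfolding Vdelta_def by (rule the_equality[where P="DP_solution M r \<delta>", OF Vs_DP DP_unique])

lemma Vdelta_CC: "Vdelta M r \<delta> \<in> CC"
  using Vdelta_eq Vs_CC by simp

lemma Vdelta_fix: "Top M r \<delta> (Vdelta M r \<delta>) q = Vdelta M r \<delta> q"
  using Vdelta_eq Vs_fix by simp

end



lemma concD:
  assumes "concave_b V" "x \<in> beliefs" "y \<in> beliefs" "0 \<le> t" "t \<le> 1"
  shows "(1 - t) * V x + t * V y \<le> V ((1 - t) *\<^sub>R x + t *\<^sub>R y)"
  using assms unfolding concave_b_def by blast

lemma seg_bound:
  fixes g :: "real \<Rightarrow> real"
  assumes conc: "\<And>s1 s2 l. 0 \<le> s1 \<Longrightarrow> s1 \<le> 1 \<Longrightarrow> 0 \<le> s2 \<Longrightarrow> s2 \<le> 1 \<Longrightarrow> 0 \<le> l \<Longrightarrow> l \<le> 1 \<Longrightarrow>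
      (1 - l) * g s1 + l * g s2 \<le> g ((1 - l) * s1 + l * s2)"
    and g0: "g 0 = c0" and g1: "g 1 = c1" and gs: "g s0 = (1 - s0) * c0 + s0 * c1"
    and s0: "0 < s0" "s0 < 1" and t: "0 \<le> t" "t \<le> 1"
  shows "g t \<le> (1 - t) * c0 + t * c1"
proof (cases "t < s0")
  case True
  define l where "l = (s0 - t) / (1 - t)"
  have t1: "t < 1" using True s0 by simp
  have l0: "0 \<le> l" "l < 1" using True t1 s0 by (auto simp: l_def)
  have h: "l * (1 - t) = s0 - t" using t1 by (simp add: l_def)
  have ls: "(1 - l) * t + l * 1 = s0" using h by (simp add: algebra_simps)
  have "(1 - l) * g t + l * g 1 \<le> g s0" using conc[of t 1 l] t l0 ls by simp
  also have "\<dots> = (1 - l) * ((1 - t) * c0 + t * c1) + l * c1"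
    unfolding gs by (simp add: ls[symmetric] algebra_simps)
  finally have "(1 - l) * g t \<le> (1 - l) * ((1 - t) * c0 + t * c1)" using g1 by simp
  then show ?thesis using l0 by simp
next
  case False
  then have tp: "0 < t" using s0 by simp
  define l where "l = s0 / t"
  have l0: "0 < l" "l \<le> 1" using False tp s0 by (auto simp: l_def)
  have ls: "(1 - l) * 0 + l * t = s0" using tp by (simp add: l_def)
  have "(1 - l) * g 0 + l * g t \<le> g s0" using conc[of 0 t l] t l0 ls by simp
  also have "\<dots> = (1 - l) * c0 + l * ((1 - t) * c0 + t * c1)"
    unfolding gs by (simp add: ls[symmetric] algebra_simps)
  finally have "l * g t \<le> l * ((1 - t) * c0 + t * c1)" using g0 by simp
  then show ?thesis using l0 by simp
qed

theorem lemma7: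
  fixes M :: "real^'w::finite^'w" and r :: "'w \<Rightarrow> real" and \<delta> :: real
    and p qI qJ :: "real^'w" and aI aJ :: real
  assumes "stochastic M" and "irreducible_chain M"
    and "0 \<le> \<delta>" and "\<delta> < 1"
    and "p \<in> Jset r"
    and "qI \<in> Iset r" and "qJ \<in> Jset r"
    and "aI + aJ = 1" and "0 < aI" and "0 < aJ"
    and "p = aI *\<^sub>R qI + aJ *\<^sub>R qJ"
    and "optimal_at M r \<delta> p (two_point aI qI qJ)"
  shows "(\<forall>t\<in>{0..1}. Vdelta M r \<delta> ((1 - t) *\<^sub>R qI + t *\<^sub>R qJ)
            = (1 - t) * Vdelta M r \<delta> qI + t * Vdelta M r \<delta> qJ)
       \<and> (\<forall>t\<in>{0..1}. optimal_at M r \<delta> ((1 - t) *\<^sub>R qI + t *\<^sub>R qJ) (two_point (1 - t) qI qJ))"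
proof -
  note sto = assms(1) and d0 = assms(3) and d1 = assms(4)
  define V where "V = Vdelta M r \<delta>"
  have VC: "V \<in> CC" unfolding V_def by (rule Vdelta_CC[OF sto d0 d1])
  have ok: "okV V 1" by (rule CC_okV[OF VC])
  have Vm: "V \<in> borel_measurable borel" using ok by (simp add: okV_def)
  have Vb: "\<And>q. q \<in> beliefs \<Longrightarrow> \<bar>V q\<bar> \<le> 1" using ok by (simp add: okV_def)
  have Vfix: "Top M r \<delta> V q = V q" for q unfolding V_def by (rule Vdelta_fix[OF sto d0 d1])
  have conc: "concave_b V" using VC by (simp add: CC_def)
  have qIb: "qI \<in> beliefs" and qII: "qI \<in> Iset r" using assms(6) by (auto simp: Iset_def)
  have qJb: "qJ \<in> beliefs" and qJI: "qJ \<notin> Iset r" using assms(7) by (auto simp: Jset_def)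
  define A where "A = obj M r \<delta> V (return borel qI)"
  define B where "B = obj M r \<delta> V (return borel qJ)"
  have aI1: "aI \<le> 1" using assms(8,10) by simp
  have objtwo: "obj M r \<delta> V (two_point a qI qJ) = a * A + (1 - a) * B" if "0 \<le> a" "a \<le> 1" for a
    unfolding two_point_mix A_def B_def
    by (rule obj_mix[OF sto goodm_return[OF qIb] goodm_return[OF qJb] that Vm Vb])
  have Vp: "V p = aI * A + aJ * B"
  proof -
    have "aJ = 1 - aI" using assms(8) by simp
    then show ?thesis
      using assms(12) objtwo[of aI] assms(9) aI1 unfolding optimal_at_def V_def[symmetric] by simp
  qed
  have AV: "A \<le> V qI" unfolding A_def using Top_upper[where r=r, OF sto d0 d1 ok qIb return_Splits[OF qIb] ] Vfix by simp
  have BV: "B \<le> V qJ" unfolding B_def using Top_upper[where r=r, OF sto d0 d1 ok qJb return_Splits[OF qJb] ] Vfix by simp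
  have "(1 - aI) * V qJ + aI * V qI \<le> V ((1 - aI) *\<^sub>R qJ + aI *\<^sub>R qI)"
    by (rule concD[OF conc qJb qIb]) (use assms(9) aI1 in auto)
  also have "(1 - aI) *\<^sub>R qJ + aI *\<^sub>R qI = p"
  proof -
    have e: "aJ = 1 - aI" using assms(8) by simp
    show ?thesis unfolding assms(11) e by (simp add: algebra_simps)
  qed
  finally have pc0: "(1 - aI) * V qJ + aI * V qI \<le> V p" .
  have eJ: "aJ = 1 - aI" using assms(8) by simp
  have pc: "aJ * V qJ + aI * V qI \<le> V p" using pc0 unfolding eJ .
  have "aI * (V qI - A) \<ge> 0" "aJ * (V qJ - B) \<ge> 0" using AV BV assms(9,10) by auto
  moreover have "aI * (V qI - A) + aJ * (V qJ - B) \<le> 0" using pc Vp by (simp add: algebra_simps)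
  ultimately have "aI * (V qI - A) = 0" "aJ * (V qJ - B) = 0" by linarith+
  then have AE: "A = V qI" and BE: "B = V qJ" using assms(9,10) by auto
  define g where "g s = V ((1 - s) *\<^sub>R qI + s *\<^sub>R qJ)" for s
  have pt: "(1 - s) *\<^sub>R qI + s *\<^sub>R qJ \<in> beliefs" if "0 \<le> s" "s \<le> 1" for s
    using beliefs_comb[OF qIb qJb that] .
  have two_S: "two_point (1 - t) qI qJ \<in> Splits ((1 - t) *\<^sub>R qI + t *\<^sub>R qJ)" if "0 \<le> t" "t \<le> 1" for t
    using two_point_Splits[OF qIb qJb, of "1 - t"] that by simp
  have lower: "(1 - t) * V qI + t * V qJ \<le> g t" if "0 \<le> t" "t \<le> 1" for t
  proof -
    have "obj M r \<delta> V (two_point (1 - t) qI qJ) = (1 - t) * V qI + t * V qJ"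
      using objtwo[of "1 - t"] that AE BE by simp
    then show ?thesis using Top_upper[where r=r, OF sto d0 d1 ok pt[OF that] two_S[OF that]] Vfix
      by (simp add: g_def)
  qed
  have segc: "(1 - l) * g s1 + l * g s2 \<le> g ((1 - l) * s1 + l * s2)"
    if "0 \<le> s1" "s1 \<le> 1" "0 \<le> s2" "s2 \<le> 1" "0 \<le> l" "l \<le> 1" for s1 s2 l
  proof -
    have "(1 - l) * g s1 + l * g s2 \<le> V ((1 - l) *\<^sub>R ((1 - s1) *\<^sub>R qI + s1 *\<^sub>R qJ) + l *\<^sub>R ((1 - s2) *\<^sub>R qI + s2 *\<^sub>R qJ))"
      unfolding g_def by (rule concD[OF conc pt[of s1] pt[of s2]]) (use that in auto)
    also have "(1 - l) *\<^sub>R ((1 - s1) *\<^sub>R qI + s1 *\<^sub>R qJ) + l *\<^sub>R ((1 - s2) *\<^sub>R qI + s2 *\<^sub>R qJ)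
        = (1 - ((1 - l) * s1 + l * s2)) *\<^sub>R qI + ((1 - l) * s1 + l * s2) *\<^sub>R qJ"
      by (simp add: algebra_simps)
    finally show ?thesis by (simp add: g_def)
  qed
  have gaJ: "g aJ = (1 - aJ) * V qI + aJ * V qJ"
  proof -
    have e: "aI = 1 - aJ" using assms(8) by simp
    have "(1 - aJ) *\<^sub>R qI + aJ *\<^sub>R qJ = p" unfolding assms(11) e by (simp add: algebra_simps)
    then have "g aJ = V p" by (simp add: g_def)
    also have "\<dots> = (1 - aJ) * V qI + aJ * V qJ" unfolding Vp AE BE e ..
    finally show ?thesis .
  qed
  have upper: "g t \<le> (1 - t) * V qI + t * V qJ" if "0 \<le> t" "t \<le> 1" for t
    by (rule seg_bound[OF segc _ _ gaJ _ _ that]) (use assms(8,9,10) in \<open>auto simp: g_def\<close>)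
  have eq: "V ((1 - t) *\<^sub>R qI + t *\<^sub>R qJ) = (1 - t) * V qI + t * V qJ" if "0 \<le> t" "t \<le> 1" for t
    using lower[OF that] upper[OF that] by (simp add: g_def)
  have opt: "optimal_at M r \<delta> ((1 - t) *\<^sub>R qI + t *\<^sub>R qJ) (two_point (1 - t) qI qJ)" if "0 \<le> t" "t \<le> 1" for t
  proof -
    have "obj M r \<delta> V (two_point (1 - t) qI qJ) = (1 - t) * V qI + t * V qJ"
      using objtwo[of "1 - t"] that AE BE by simp
    then show ?thesis unfolding optimal_at_def V_def[symmetric] using two_S[OF that] eq[OF that] by simp
  qed
  show ?thesis using eq opt unfolding V_def by auto
qed


end
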